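(* Consider the ample-reserves (lending constraint slack) equilibrium conditions with nominal rate $i>0$. If the interest on reserves is set to $i_r=i+\gamma'(\underline r)$, where $\underline r>0$ solves $\gamma'(\underline r)\underline r-\gamma(\underline r)=k$, then consumption in type-2 meetings is efficient: $q_2=q^*$.
   Context: DM preferences: $u,c$ with $u'>0,u''<0$, $c'>0,c''\ge0$, $u(0)=c(0)=0$, $q^*$ solves $u'(q^* )=c'(q^* )$; with buyer bargaining power $\theta\in(0,1]$, the liquidity premium is $\lambda(q)=\theta[u'(q)-c'(q)]/[(1-\theta)u'(q)+\theta c'(q)]$ for $q<q^*$, $\lambda(q^* )=0$, strictly decreasing on $[0,q^* )$. A type-2 buyer (who can pay with cash, deposits and bank notes, but not unsecured credit) consumes $q_2$ with $\lambda(q_2)=i_\ell$ when borrowing from banks. Bank cost functions $\gamma,\eta:[0,\infty)\to[0,\infty)$ twice differentiable with $\gamma',\gamma''>0$, $\eta',\eta''>0$ on $(0,\infty)$, $\gamma(0)=\gamma'(0)=\eta(0)=\eta'(0)=0$; entry cost $k>0$. In the ample-reserves equilibrium the bank's reserves $\tilde r$ and loans $\tilde\ell\ge0$ satisfy $i_d=i_r-\gamma'(\tilde r)$, $i_\ell=\eta'(\tilde\ell)$, $1+i=(1+i_d)(1+i_\ell)$, and $\gamma'(\tilde r)\tilde r-\gamma(\tilde r)+\eta'(\tilde\ell)\tilde\ell-\eta(\tilde\ell)=k$. *)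

theory Defs
  imports Complex_Main
begin

text \<open>Liquidity premium lambda(q) with buyer bargaining power theta, given the
marginal utility u1 = u' and marginal cost c1 = c'.\<close>
definition liq_premium ::
  "real \<Rightarrow> (real \<Rightarrow> real) \<Rightarrow> (real \<Rightarrow> real) \<Rightarrow> real \<Rightarrow> real \<Rightarrow> real" where
  "liq_premium \<theta> u1 c1 qstar q =
     (if q < qstar then \<theta> * (u1 q - c1 q) / ((1 - \<theta>) * u1 q + \<theta> * c1 q) else 0)"

end

theory Submission
  imports Defs
begin

lemma strict_inc:
  fixes f f' :: "real \<Rightarrow> real"
  assumes d: "\<And>x. x\<ge>0 \<Longrightarrow> (f has_real_derivative f' x) (at x within {0..})"
    and p: "\<And>x. x>0 \<Longrightarrow> f' x > 0" and a: "0 \<le> a" "a < b"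
  shows "f a < f b"
proof (rule DERIV_pos_imp_increasing_open[OF \<open>a<b\<close>])
  fix x assume x: "a<x" "x<b"
  then have "(f has_real_derivative f' x) (at x within {0<..})"
    using d[of x] a by (auto intro: DERIV_subset)
  then have "(f has_real_derivative f' x) (at x)"
    using at_within_open[of x "{0<..}"] x a by simp
  then show "\<exists>y. (f has_real_derivative y) (at x) \<and> 0 < y" using p[of x] x a by auto
next
  have "continuous_on {0..} f"
    unfolding continuous_on_eq_continuous_within
    using d DERIV_continuous by blast
  then show "continuous_on {a..b} f" by (rule continuous_on_subset) (use a in auto)
qed

theorem proposition3:
  fixes u c u1 u2 c1 c2 :: "real \<Rightarrow> real"
    and \<gamma> \<gamma>1 \<gamma>2 \<eta> \<eta>1 \<eta>2 :: "real \<Rightarrow> real"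
    and \<theta> k qstar q2 i i_r i_d i_l r_tilde l_tilde r_low :: real
  assumes u_d1: "\<And>q. q \<ge> 0 \<Longrightarrow> (u has_real_derivative u1 q) (at q within {0..})"
    and u_d2: "\<And>q. q \<ge> 0 \<Longrightarrow> (u1 has_real_derivative u2 q) (at q within {0..})"
    and c_d1: "\<And>q. q \<ge> 0 \<Longrightarrow> (c has_real_derivative c1 q) (at q within {0..})"
    and c_d2: "\<And>q. q \<ge> 0 \<Longrightarrow> (c1 has_real_derivative c2 q) (at q within {0..})"
    and u_pos: "\<And>q. q > 0 \<Longrightarrow> u1 q > 0"
    and u_conc: "\<And>q. q > 0 \<Longrightarrow> u2 q < 0"
    and c_pos: "\<And>q. q > 0 \<Longrightarrow> c1 q > 0"
    and c_conv: "\<And>q. q > 0 \<Longrightarrow> c2 q \<ge> 0"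
    and u0: "u 0 = 0" and c0: "c 0 = 0"
    and qstar_pos: "qstar > 0" and qstar: "u1 qstar = c1 qstar"
    and theta: "0 < \<theta>" "\<theta> \<le> 1"
    and g_d1: "\<And>x. x \<ge> 0 \<Longrightarrow> (\<gamma> has_real_derivative \<gamma>1 x) (at x within {0..})"
    and g_d2: "\<And>x. x \<ge> 0 \<Longrightarrow> (\<gamma>1 has_real_derivative \<gamma>2 x) (at x within {0..})"
    and e_d1: "\<And>x. x \<ge> 0 \<Longrightarrow> (\<eta> has_real_derivative \<eta>1 x) (at x within {0..})"
    and e_d2: "\<And>x. x \<ge> 0 \<Longrightarrow> (\<eta>1 has_real_derivative \<eta>2 x) (at x within {0..})"
    and g_nonneg: "\<And>x. x \<ge> 0 \<Longrightarrow> \<gamma> x \<ge> 0"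
    and e_nonneg: "\<And>x. x \<ge> 0 \<Longrightarrow> \<eta> x \<ge> 0"
    and g_pos: "\<And>x. x > 0 \<Longrightarrow> \<gamma>1 x > 0 \<and> \<gamma>2 x > 0"
    and e_pos: "\<And>x. x > 0 \<Longrightarrow> \<eta>1 x > 0 \<and> \<eta>2 x > 0"
    and g0: "\<gamma> 0 = 0" "\<gamma>1 0 = 0"
    and e0: "\<eta> 0 = 0" "\<eta>1 0 = 0"
    and k_pos: "k > 0"
    and i_pos: "i > 0"
    and r_low: "r_low > 0" "\<gamma>1 r_low * r_low - \<gamma> r_low = k"
    and i_r: "i_r = i + \<gamma>1 r_low"
    and eq_r: "r_tilde \<ge> 0" and eq_l: "l_tilde \<ge> 0"
    and eq_d: "i_d = i_r - \<gamma>1 r_tilde"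
    and eq_il: "i_l = \<eta>1 l_tilde"
    and eq_fisher: "1 + i = (1 + i_d) * (1 + i_l)"
    and eq_entry: "\<gamma>1 r_tilde * r_tilde - \<gamma> r_tilde + \<eta>1 l_tilde * l_tilde - \<eta> l_tilde = k"
    and q2_dom: "0 < q2" "q2 \<le> qstar"
    and q2_eq: "liq_premium \<theta> u1 c1 qstar q2 = i_l"
  shows "q2 = qstar"
proof -
  define F where "F x = \<gamma>1 x * x - \<gamma> x" for x
  define H where "H x = \<eta>1 x * x - \<eta> x" for x
  have Fd: "(F has_real_derivative \<gamma>2 x * x) (at x within {0..})" if "x \<ge> 0" for x
    unfolding F_def using g_d1[OF that] g_d2[OF that]
    by (auto intro!: derivative_eq_intros)
  have Hd: "(H has_real_derivative \<eta>2 x * x) (at x within {0..})" if "x \<ge> 0" for x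
    unfolding H_def using e_d1[OF that] e_d2[OF that]
    by (auto intro!: derivative_eq_intros)
  have l0: "l_tilde = 0"
  proof (rule ccontr)
    assume "l_tilde \<noteq> 0"
    hence lp: "l_tilde > 0" using eq_l by simp
    have "H 0 < H l_tilde" by (rule strict_inc[OF Hd]) (use e_pos lp in auto)
    hence H1: "H l_tilde > 0" using e0 by (simp add: H_def)
    have "r_tilde < r_low"
    proof (rule ccontr)
      assume "\<not> r_tilde < r_low"
      hence "r_low = r_tilde \<or> r_low < r_tilde" by auto
      hence "F r_low \<le> F r_tilde"
      proof
        assume "r_low < r_tilde"
        then show ?thesis using strict_inc[OF Fd, of r_low r_tilde] g_pos r_low by auto
      qed simp
      then show False using eq_entry r_low H1 unfolding F_def H_def by linarith
    qed
    hence "\<gamma>1 r_tilde < \<gamma>1 r_low"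
      using strict_inc[OF g_d2, of r_tilde r_low] g_pos eq_r by auto
    hence "i_d > i" using eq_d i_r by simp
    moreover have "i_l > 0" using eq_il e_pos lp by auto
    ultimately have "(1+i_d)*(1+i_l) > (1+i) * 1"
      using i_pos by (intro mult_strict_mono) auto
    thus False using eq_fisher by simp
  qed
  hence il0: "i_l = 0" using eq_il e0 by simp
  show ?thesis
  proof (rule ccontr)
    assume "q2 \<noteq> qstar"
    hence lt: "q2 < qstar" using q2_dom by simp
    have "c1 q2 - u1 q2 < c1 qstar - u1 qstar"
      by (rule strict_inc[where f'="\<lambda>x. c2 x - u2 x"])
         (use c_d2 u_d2 c_conv u_conc lt q2_dom in \<open>auto intro!: derivative_eq_intros\<close>, fastforce)
    hence uc: "u1 q2 > c1 q2" using qstar by simp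
    have den: "(1 - \<theta>) * u1 q2 + \<theta> * c1 q2 > 0"
      using u_pos[OF q2_dom(1)] c_pos[OF q2_dom(1)] theta
      by (smt (verit) mult_nonneg_nonneg mult_pos_pos)
    have "liq_premium \<theta> u1 c1 qstar q2 > 0"
      unfolding liq_premium_def using lt uc den theta by auto
    thus False using q2_eq il0 by simp
  qed
qed

end
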